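(* Let $I=(x_1,\ldots,x_n)$ be a list of items with sizes $x_i\in(1/3,1]$, and let $I'=(x'_1,\ldots,x'_n)$ be a list of items with sizes in $(0,1]$ obtained from $I$ by increasing the sizes of one or more items, i.e. $x'_i\ge x_i$ for all $i$. Then $\mathrm{BF}(I)\le \mathrm{BF}(I')$.
   Context: The online algorithm Best Fit (BF) processes a list of items with sizes in $(0,1]$ in the given order and packs the current item into the fullest bin (largest current load, i.e. sum of sizes of items in it) into which it fits without exceeding total size $1$, opening a new unit-capacity bin if it fits into no existing bin; items are never moved. $\mathrm{BF}(I)$ denotes the number of bins Best Fit uses on list $I$. *)

theory Defs
  imports Complex_Main
begin

text \<open>The state is the list of current bin loads (in order of opening).
  An item of size x goes into a bin of largest load among those with load + x \<le> 1
  (ties broken by the lowest index; the resulting multiset of loads, and hence the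
  number of bins, does not depend on the tie-breaking); if no bin fits, a new bin
  with load x is opened.\<close>

definition bf_step :: "real list \<Rightarrow> real \<Rightarrow> real list" where
  "bf_step loads x =
    (let fits = [i \<leftarrow> [0..<length loads]. loads ! i + x \<le> 1] in
     if fits = [] then loads @ [x]
     else (let m = Max (set (map (\<lambda>i. loads ! i) fits));
               j = hd [i \<leftarrow> fits. loads ! i = m]
           in loads[j := loads ! j + x]))"

definition bf_loads :: "real list \<Rightarrow> real list" where
  "bf_loads xs = foldl bf_step [] xs"

definition BF :: "real list \<Rightarrow> nat" where
  "BF xs = length (bf_loads xs)"

end

theory Submission
  imports Defs
begin

definition cnt :: "real \<Rightarrow> real list \<Rightarrow> nat" where
  "cnt c L = length (filter (\<lambda>l. l \<le> c) L)"

lemma cnt_append: "cnt c (L @ [x]) = cnt c L + (if x \<le> c then 1 else 0)"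
  by (simp add: cnt_def)

lemma cnt_update: "j < length L \<Longrightarrow>
  cnt c (L[j := v]) + (if L ! j \<le> c then 1 else 0) = cnt c L + (if v \<le> c then 1 else 0)"
proof (induction L arbitrary: j)
  case Nil then show ?case by simp
next
  case (Cons a L) then show ?case by (cases j) (auto simp: cnt_def)
qed

lemma cnt_mono: "c \<le> d \<Longrightarrow> cnt c L \<le> cnt d L"
  by (induction L) (auto simp: cnt_def)

lemma cnt_strict: "v \<in> set L \<Longrightarrow> c < v \<Longrightarrow> v \<le> d \<Longrightarrow> cnt c L < cnt d L"
proof (induction L)
  case Nil then show ?case by simp
next
  case (Cons a L)
  have m: "cnt c L \<le> cnt d L" using Cons.prems by (intro cnt_mono) auto
  show ?case
  proof (cases "v = a")
    case True then show ?thesis using Cons.prems m by (auto simp: cnt_def)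
  next
    case False then show ?thesis using Cons m by (auto simp: cnt_def)
  qed
qed

lemma cnt_gap: "(\<forall>l\<in>set L. l \<le> d \<longrightarrow> l \<le> c) \<Longrightarrow> cnt d L \<le> cnt c L"
  by (induction L) (auto simp: cnt_def)

lemma cnt_zero: "(\<forall>l\<in>set L. l > d) \<Longrightarrow> cnt d L = 0"
  by (induction L) (auto simp: cnt_def)

lemma cnt_pos: "v \<in> set L \<Longrightarrow> v \<le> d \<Longrightarrow> 0 < cnt d L"
  by (induction L) (auto simp: cnt_def)

lemma bf_step_new: "(\<forall>l\<in>set L. 1 < l + x) \<Longrightarrow> bf_step L x = L @ [x]"
proof -
  assume a: "\<forall>l\<in>set L. 1 < l + x"
  have "[i \<leftarrow> [0..<length L]. L ! i + x \<le> 1] = []"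
  proof -
    have "\<forall>i<length L. 1 < L ! i + x" using a by simp
    then show ?thesis by (simp add: filter_empty_conv not_le)
  qed
  then show ?thesis by (simp add: bf_step_def)
qed

lemma bf_step_fit: assumes "\<exists>l\<in>set L. l + x \<le> 1"
  shows "\<exists>j<length L. L ! j + x \<le> 1 \<and> (\<forall>l\<in>set L. l + x \<le> 1 \<longrightarrow> l \<le> L ! j)
     \<and> bf_step L x = L[j := L ! j + x]"
proof -
  define fits where "fits = [i \<leftarrow> [0..<length L]. L ! i + x \<le> 1]"
  obtain i0 where i0: "i0 < length L" "L ! i0 + x \<le> 1" using assms by (auto simp: in_set_conv_nth)
  have "i0 \<in> set fits" using i0 by (simp add: fits_def)
  then have ne: "fits \<noteq> []" by auto
  define m where "m = Max (set (map (\<lambda>i. L ! i) fits))"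
  have fin: "finite (set (map (\<lambda>i. L ! i) fits))" by simp
  have "m \<in> set (map (\<lambda>i. L ! i) fits)" unfolding m_def using ne by (intro Max_in) auto
  then have ne2: "[i \<leftarrow> fits. L ! i = m] \<noteq> []" by (auto simp: filter_empty_conv)
  define j where "j = hd [i \<leftarrow> fits. L ! i = m]"
  have "j \<in> set [i \<leftarrow> fits. L ! i = m]" unfolding j_def using ne2 by (rule hd_in_set)
  then have j: "j < length L" "L ! j + x \<le> 1" "L ! j = m" by (auto simp: fits_def)
  have mx: "\<forall>l\<in>set L. l + x \<le> 1 \<longrightarrow> l \<le> L ! j"
  proof (intro ballI impI)
    fix l assume "l \<in> set L" "l + x \<le> 1"
    then obtain i where "i < length L" "L ! i = l" by (auto simp: in_set_conv_nth)
    then have "l \<in> set (map (\<lambda>i. L ! i) fits)" using \<open>l + x \<le> 1\<close> by (auto simp: fits_def)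
    then show "l \<le> L ! j" using j(3) fin unfolding m_def by simp
  qed
  have "bf_step L x = L[j := L ! j + x]"
    using ne unfolding bf_step_def Let_def fits_def[symmetric] m_def[symmetric] j_def[symmetric] by simp
  then show ?thesis using j mx by blast
qed

definition pw :: "real list \<Rightarrow> bool" where
  "pw L \<longleftrightarrow> (\<forall>i<length L. \<forall>j<length L. i \<noteq> j \<longrightarrow> 1 < L ! i + L ! j)"

lemma pw_append: "pw L \<Longrightarrow> \<forall>l\<in>set L. 1 < l + x \<Longrightarrow> pw (L @ [x])"
  unfolding pw_def
  by (auto simp: nth_append less_Suc_eq add.commute dest: nth_mem)

lemma pw_update: assumes "pw L" "\<forall>l\<in>set L. 1/3 < l" "1/3 < x" "j < length L"
  shows "pw (L[j := L ! j + x])"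
  unfolding pw_def
proof (intro allI impI)
  fix i i' assume h: "i < length (L[j := L ! j + x])" "i' < length (L[j := L ! j + x])" "i \<noteq> i'"
  have lj: "1/3 < L ! j" "1/3 < L ! i" "1/3 < L ! i'" using assms h by auto
  show "1 < L[j := L ! j + x] ! i + L[j := L ! j + x] ! i'"
    using assms(1) h lj assms(3) unfolding pw_def
    by (cases "i = j"; cases "i' = j") (auto simp: nth_list_update)
qed

lemma cnt_ex: "0 < cnt c L \<Longrightarrow> \<exists>l\<in>set L. l \<le> c"
  by (induction L) (auto simp: cnt_def split: if_splits)

definition Inv :: "real list \<Rightarrow> real list \<Rightarrow> bool" where
  "Inv L L' \<longleftrightarrow> (\<forall>l\<in>set L. 1/3 < l) \<and> (\<forall>l\<in>set L'. 1/3 < l) \<and> length L \<le> length L' \<and> pw L'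
     \<and> (\<forall>c. c < 2/3 \<longrightarrow> cnt c L' \<le> cnt c L + 2 * (length L' - length L))"

lemma Inv_step:
  assumes inv: "Inv L L'" and x: "1/3 < x" "x \<le> x'"
  shows "Inv (bf_step L x) (bf_step L' x')"
proof -
  have pL: "\<forall>l\<in>set L. 1/3 < l" and pL': "\<forall>l\<in>set L'. 1/3 < l" and len: "length L \<le> length L'"
    and C: "\<And>c. c < 2/3 \<Longrightarrow> cnt c L' \<le> cnt c L + 2 * (length L' - length L)"
    and pw: "pw L'"
    using inv unfolding Inv_def by auto
  have upd: "\<forall>l\<in>set (L[j := v]). 1/3 < l" if "\<forall>l\<in>set L. 1/3 < l" "1/3 < v" for L :: "real list" and j v
    using that set_update_subset_insert[of L j v] by auto
  show ?thesis
  proof (cases "\<exists>l\<in>set L. l + x \<le> 1")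
    case True
    then obtain j where j: "j<length L" "L ! j + x \<le> 1" "\<forall>l\<in>set L. l + x \<le> 1 \<longrightarrow> l \<le> L ! j"
      "bf_step L x = L[j := L ! j + x]" using bf_step_fit by blast
    have lj: "1/3 < L ! j" using pL j(1) by auto
    show ?thesis
    proof (cases "\<exists>l\<in>set L'. l + x' \<le> 1")
      case True
      then obtain j' where j': "j'<length L'" "L' ! j' + x' \<le> 1" "\<forall>l\<in>set L'. l + x' \<le> 1 \<longrightarrow> l \<le> L' ! j'"
        "bf_step L' x' = L'[j' := L' ! j' + x']" using bf_step_fit by blast
      have lj': "1/3 < L' ! j'" using pL' j'(1) by auto
      have "cnt c (L'[j' := L' ! j' + x']) \<le> cnt c (L[j := L ! j + x]) + 2 * (length L' - length L)"
        if c: "c < 2/3" for c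
      proof -
        have u1: "cnt c (L[j := L ! j + x]) + (if L ! j \<le> c then 1 else 0) = cnt c L"
          using cnt_update[OF j(1), of c "L ! j + x"] lj x c by auto
        have u2: "cnt c (L'[j' := L' ! j' + x']) + (if L' ! j' \<le> c then 1 else 0) = cnt c L'"
          using cnt_update[OF j'(1), of c "L' ! j' + x'"] lj' x c by auto
        show ?thesis
        proof (cases "L ! j \<le> c \<and> c < L' ! j'")
          case True
          have "cnt (L' ! j') L \<le> cnt c L"
            using j(3) j'(2) x True by (intro cnt_gap) force
          moreover have "cnt c L' < cnt (L' ! j') L'"
            using True j'(1) by (intro cnt_strict[of "L' ! j'"]) auto
          moreover have "cnt (L' ! j') L' \<le> cnt (L' ! j') L + 2 * (length L' - length L)"
            using j'(2) x by (intro C) auto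
          ultimately show ?thesis using u1 u2 True by auto
        next
          case False
          then show ?thesis using u1 u2 C[OF c] by (auto split: if_splits)
        qed
      qed
      moreover have "\<forall>l\<in>set (L[j := L ! j + x]). 1/3 < l" by (rule upd[OF pL]) (use lj x in simp)
      moreover have "\<forall>l\<in>set (L'[j' := L' ! j' + x']). 1/3 < l" by (rule upd[OF pL']) (use lj' x in simp)
      moreover have "pw (L'[j' := L' ! j' + x'])" using pw_update[OF pw pL' _ j'(1), of x'] x by simp
      ultimately show ?thesis using j(4) j'(4) len unfolding Inv_def by auto
    next
      case False
      then have s': "bf_step L' x' = L' @ [x']" using bf_step_new by force
      have pw': "pw (L' @ [x'])" using pw_append[OF pw] False by force
      have "cnt c (L' @ [x']) \<le> cnt c (L[j := L ! j + x]) + 2 * (Suc (length L') - length L)"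
        if c: "c < 2/3" for c
      proof -
        have u1: "cnt c (L[j := L ! j + x]) + (if L ! j \<le> c then 1 else 0) = cnt c L"
          using cnt_update[OF j(1), of c "L ! j + x"] lj x c by auto
        show ?thesis using u1 C[OF c] cnt_append[of c L' x'] len by (auto split: if_splits)
      qed
      moreover have "\<forall>l\<in>set (L[j := L ! j + x]). 1/3 < l" by (rule upd[OF pL]) (use lj x in simp)
      ultimately show ?thesis using j(4) s' pL' x len pw' unfolding Inv_def by auto
    qed
  next
    case False
    then have s: "bf_step L x = L @ [x]" using bf_step_new by force
    have allbig: "\<forall>l\<in>set L. 1 - x < l" using False by force
    show ?thesis
    proof (cases "\<exists>l\<in>set L'. l + x' \<le> 1")
      case True
      then obtain j' where j': "j'<length L'" "L' ! j' + x' \<le> 1" "\<forall>l\<in>set L'. l + x' \<le> 1 \<longrightarrow> l \<le> L' ! j'"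
        "bf_step L' x' = L'[j' := L' ! j' + x']" using bf_step_fit by blast
      have lj': "1/3 < L' ! j'" using pL' j'(1) by auto
      have z: "cnt (L' ! j') L = 0" using allbig j'(2) x by (intro cnt_zero) force
      have p: "0 < cnt (L' ! j') L'" using j'(1) by (intro cnt_pos[of "L' ! j'"]) auto
      have Cj: "cnt (L' ! j') L' \<le> cnt (L' ! j') L + 2 * (length L' - length L)"
        using j'(2) x by (intro C) auto
      have k: "length L < length L'" using z p Cj by auto
      have "cnt c (L'[j' := L' ! j' + x']) \<le> cnt c (L @ [x]) + 2 * (length L' - Suc (length L))"
        if c: "c < 2/3" for c
      proof -
        have u2: "cnt c (L'[j' := L' ! j' + x']) + (if L' ! j' \<le> c then 1 else 0) = cnt c L'"
          using cnt_update[OF j'(1), of c "L' ! j' + x'"] lj' x c by auto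
        show ?thesis
        proof (cases "L' ! j' \<le> c")
          case le: True
          show ?thesis
          proof (cases "x \<le> c")
            case True then show ?thesis using le u2 C[OF c] cnt_append[of c L x] k by auto
          next
            case False
            have "\<forall>l\<in>set (L'[j' := L' ! j' + x']). c < l"
            proof
              fix l assume "l \<in> set (L'[j' := L' ! j' + x'])"
              then obtain i where i: "i < length L'" "L'[j' := L' ! j' + x'] ! i = l"
                by (auto simp: in_set_conv_nth)
              show "c < l"
              proof (cases "i = j'")
                case True then show ?thesis using i lj' x c by simp
              next
                case ne: False
                then have "1 < L' ! i + L' ! j'" using pw i j'(1) unfolding pw_def by blast
                then show ?thesis using i ne j'(2) x False by simp
              qed
            qed
            then have "cnt c (L'[j' := L' ! j' + x']) = 0" by (rule cnt_zero)
            then show ?thesis by simp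
          qed
        next
          case False
          have lt: "cnt c L' < cnt (L' ! j') L'"
            using False j'(1) by (intro cnt_strict[of "L' ! j'"]) auto
          show ?thesis
          proof (cases "cnt c L' = 0")
            case True then show ?thesis using u2 by simp
          next
            case nz: False
            then obtain l where l: "l \<in> set L'" "l \<le> c" using cnt_ex by blast
            then obtain i where i: "i < length L'" "L' ! i = l" by (auto simp: in_set_conv_nth)
            have "i \<noteq> j'" using i l False by auto
            then have "1 < L' ! i + L' ! j'" using pw i j'(1) unfolding pw_def by blast
            then have "x \<le> c" using i l j'(2) x by linarith
            then have "cnt c (L @ [x]) = cnt c L + 1" using cnt_append[of c L x] by simp
            then show ?thesis using u2 Cj z k False lt by auto
          qed
        qed
      qed
      moreover have "\<forall>l\<in>set (L'[j' := L' ! j' + x']). 1/3 < l" by (rule upd[OF pL']) (use lj' x in simp)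
      moreover have "pw (L'[j' := L' ! j' + x'])" using pw_update[OF pw pL' _ j'(1), of x'] x by simp
      ultimately show ?thesis using s j'(4) pL x k unfolding Inv_def by auto
    next
      case False
      then have s': "bf_step L' x' = L' @ [x']" using bf_step_new by force
      have pw': "pw (L' @ [x'])" using pw_append[OF pw] False by force
      have "cnt c (L' @ [x']) \<le> cnt c (L @ [x]) + 2 * (length L' - length L)"
        if c: "c < 2/3" for c
        using C[OF c] cnt_append[of c L x] cnt_append[of c L' x'] x by auto
      then show ?thesis using s s' pL pL' x len pw' unfolding Inv_def by auto
    qed
  qed
qed

theorem proposition7:
  fixes I I' :: "real list"
  assumes "length I' = length I"
    and "\<forall>i < length I. 1/3 < I ! i \<and> I ! i \<le> 1"
    and "\<forall>i < length I'. 0 < I' ! i \<and> I' ! i \<le> 1"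
    and "\<forall>i < length I. I ! i \<le> I' ! i"
  shows "BF I \<le> BF I'"
proof -
  have "n \<le> length I \<Longrightarrow> Inv (bf_loads (take n I)) (bf_loads (take n I'))" for n
  proof (induction n)
    case 0 then show ?case by (simp add: bf_loads_def Inv_def cnt_def pw_def)
  next
    case (Suc n)
    then have n: "n < length I" by simp
    have e1: "take (Suc n) I = take n I @ [I ! n]" using n by (simp add: take_Suc_conv_app_nth)
    have e2: "take (Suc n) I' = take n I' @ [I' ! n]" using n assms(1) by (simp add: take_Suc_conv_app_nth)
    show ?case unfolding e1 e2 bf_loads_def foldl_append foldl_Cons foldl_Nil
      using Inv_step[of "bf_loads (take n I)" "bf_loads (take n I')" "I ! n" "I' ! n"]
        Suc n assms(2,4) unfolding bf_loads_def by simp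
  qed
  from this[of "length I"] show ?thesis using assms(1) unfolding BF_def Inv_def by simp
qed

end
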